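(* Let $(X,\Sigma,\mu)$ be a measure space, $n,l\ge1$, $\mathbb{F}\in\{\mathbb{R},\mathbb{C}\}$, $(X_j)_{j\in[1,l]}$ a partition of $X$ into measurable subsets, and $h\in L^2(X,\mu;\mathbb{F})$. Suppose there are measurable subsets $Y_j\subseteq X_j$, $j\in[1,l]$, such that $\mu\big((X_j\setminus Y_j)\cap h^{-1}(\mathbb{F}\setminus\{0\})\big)>0$ for every $j\in[1,l]$ and $\sum_{j=1}^l\dim L^2(Y_j,\mu;\mathbb{F})\ge n$. Define $W:L^2(X,\mu;\mathbb{F}^n)\to\prod_{j\in[1,l]}\mathbb{F}^n$ by $W(F)=\big(\int_{X_j}h(x)f_x\,d\mu(x)\big)_{j\in[1,l]}$ for $F=(f_x)_{x\in X}$. Then for every $D=(d_j)_{j\in[1,l]}\in\prod_{j\in[1,l]}\mathbb{F}^n$, $W^{-1}(\{D\})$ contains at least one continuous frame $\Phi\in\mathcal{F}^{\mathbb{F}}_{(X,\mu),n}$.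
   Context: A family $\Phi=(\varphi_x)_{x\in X}$ in $\mathbb{F}^n$ (with measurable coordinates) is a continuous frame indexed by $(X,\mu)$ if there are $0<A\le B$ with $A\|v\|^2\le\int_X|\langle v,\varphi_x\rangle|^2d\mu(x)\le B\|v\|^2$ for all $v\in\mathbb{F}^n$. $\mathcal{F}^{\mathbb{F}}_{(X,\mu),n}$ denotes the set of such frames, viewed as a subset of $L^2(X,\mu;\mathbb{F}^n)$. $L^2(Y_j,\mu;\mathbb{F})$ is the $L^2$ space of the restriction of $\mu$ to $Y_j$. *)

theory Defs
  imports "HOL-Analysis.Analysis"
begin

text \<open>The field F in {R, C} is modelled as a subset K of the complex numbers with
  K = Reals or K = UNIV. Vectors in F^n are complex vectors with components in K.\<close>

definition field_choice :: "complex set \<Rightarrow> bool" where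
  "field_choice K \<longleftrightarrow> K = \<real> \<or> K = UNIV"

definition in_Kn :: "complex set \<Rightarrow> complex ^ 'n \<Rightarrow> bool" where
  "in_Kn K v \<longleftrightarrow> (\<forall>i. v $ i \<in> K)"

definition cinner_vec :: "complex ^ 'n::finite \<Rightarrow> complex ^ 'n \<Rightarrow> complex" where
  "cinner_vec v w = (\<Sum>i\<in>UNIV. v $ i * cnj (w $ i))"

definition L2_scalar :: "'a measure \<Rightarrow> complex set \<Rightarrow> ('a \<Rightarrow> complex) \<Rightarrow> bool" where
  "L2_scalar M K f \<longleftrightarrow> f \<in> borel_measurable M \<and> (\<forall>x\<in>space M. f x \<in> K)
     \<and> integrable M (\<lambda>x. (cmod (f x))\<^sup>2)"

definition L2_vec :: "'a measure \<Rightarrow> complex set \<Rightarrow> ('a \<Rightarrow> complex ^ 'n::finite) \<Rightarrow> bool" where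
  "L2_vec M K F \<longleftrightarrow> F \<in> borel_measurable M \<and> (\<forall>x\<in>space M. in_Kn K (F x))
     \<and> integrable M (\<lambda>x. (norm (F x))\<^sup>2)"

text \<open>Dimension (as an extended natural) of the K-vector space L2(M;K), i.e. the
  supremum of the sizes of finite families that are linearly independent modulo
  equality almost everywhere.\<close>
definition L2_dim :: "'a measure \<Rightarrow> complex set \<Rightarrow> enat" where
  "L2_dim M K = Sup {enat m | m. \<exists>f :: nat \<Rightarrow> 'a \<Rightarrow> complex.
      (\<forall>i<m. L2_scalar M K (f i)) \<and>
      (\<forall>c. (\<forall>i<m. c i \<in> K) \<longrightarrow> (AE x in M. (\<Sum>i<m. c i * f i x) = 0)
             \<longrightarrow> (\<forall>i<m. c i = 0))}"

definition cont_frame :: "'a measure \<Rightarrow> complex set \<Rightarrow> ('a \<Rightarrow> complex ^ 'n::finite) \<Rightarrow> bool" where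
  "cont_frame M K \<Phi> \<longleftrightarrow> (\<forall>x\<in>space M. in_Kn K (\<Phi> x)) \<and> (\<forall>i. (\<lambda>x. \<Phi> x $ i) \<in> borel_measurable M) \<and>
     (\<exists>A B. 0 < A \<and> A \<le> B \<and> (\<forall>v. in_Kn K v \<longrightarrow>
        ennreal (A * (norm v)\<^sup>2) \<le> (\<integral>\<^sup>+ x. ennreal ((cmod (cinner_vec v (\<Phi> x)))\<^sup>2) \<partial>M) \<and>
        (\<integral>\<^sup>+ x. ennreal ((cmod (cinner_vec v (\<Phi> x)))\<^sup>2) \<partial>M) \<le> ennreal (B * (norm v)\<^sup>2)))"

definition W_op :: "'a measure \<Rightarrow> ('a \<Rightarrow> complex) \<Rightarrow> (nat \<Rightarrow> 'a set) \<Rightarrow> ('a \<Rightarrow> complex ^ 'n::finite)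
     \<Rightarrow> nat \<Rightarrow> complex ^ 'n" where
  "W_op M h X F = (\<lambda>j. \<chi> i. (LINT x:X j|M. h x * F x $ i))"

end

theory Submission
  imports Defs
begin

definition sqi :: "'a measure \<Rightarrow> ('a \<Rightarrow> complex) \<Rightarrow> bool" where
  "sqi M u \<longleftrightarrow> u \<in> borel_measurable M \<and> integrable M (\<lambda>x. (cmod (u x))\<^sup>2)"

lemma meas_sq: "w \<in> borel_measurable M \<Longrightarrow> (\<lambda>x. (cmod (w x))\<^sup>2) \<in> borel_measurable M"
  by measurable

lemma sq_add_le: "(cmod (a + b))\<^sup>2 \<le> 2 * (cmod a)\<^sup>2 + 2 * (cmod b)\<^sup>2"
proof -
  have "cmod (a+b) \<le> cmod a + cmod b" by (rule norm_triangle_ineq)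
  hence "(cmod (a+b))\<^sup>2 \<le> (cmod a + cmod b)\<^sup>2" by (simp add: power_mono)
  also have "\<dots> \<le> 2 * (cmod a)\<^sup>2 + 2 * (cmod b)\<^sup>2"
  proof -
    have "0 \<le> (cmod a - cmod b)\<^sup>2" by simp
    thus ?thesis unfolding power2_sum power2_diff by linarith
  qed
  finally show ?thesis .
qed

lemma sqi_add: "sqi M u \<Longrightarrow> sqi M v \<Longrightarrow> sqi M (\<lambda>x. u x + v x)"
  unfolding sqi_def
proof (intro conjI)
  assume a: "u \<in> borel_measurable M \<and> integrable M (\<lambda>x. (cmod (u x))\<^sup>2)"
     "v \<in> borel_measurable M \<and> integrable M (\<lambda>x. (cmod (v x))\<^sup>2)"
  show m: "(\<lambda>x. u x + v x) \<in> borel_measurable M" using a by auto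
  show "integrable M (\<lambda>x. (cmod (u x + v x))\<^sup>2)"
  proof (rule Bochner_Integration.integrable_bound[OF _ _ AE_I2])
    show "integrable M (\<lambda>x. 2 * (cmod (u x))\<^sup>2 + 2 * (cmod (v x))\<^sup>2)" using a by auto
    show "(\<lambda>x. (cmod (u x + v x))\<^sup>2) \<in> borel_measurable M" using m by auto
    fix x show "norm ((cmod (u x + v x))\<^sup>2) \<le> norm (2 * (cmod (u x))\<^sup>2 + 2 * (cmod (v x))\<^sup>2)"
      using sq_add_le[of "u x" "v x"] by simp
  qed
qed

lemma sqi_cmult: "sqi M u \<Longrightarrow> sqi M (\<lambda>x. c * u x)"
  unfolding sqi_def by (auto simp: norm_mult power_mult_distrib)

lemma sqi_cnj: "sqi M u \<Longrightarrow> sqi M (\<lambda>x. cnj (u x))"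
  unfolding sqi_def by (auto intro: borel_measurable_continuous_on[OF continuous_on_cnj[OF continuous_on_id]])

lemma sqi_ind: "A \<in> sets M \<Longrightarrow> sqi M u \<Longrightarrow> sqi M (\<lambda>x. indicator A x *\<^sub>R u x)"
  unfolding sqi_def
proof (intro conjI)
  assume A: "A \<in> sets M" and a: "u \<in> borel_measurable M \<and> integrable M (\<lambda>x. (cmod (u x))\<^sup>2)"
  show m: "(\<lambda>x. indicator A x *\<^sub>R u x) \<in> borel_measurable M" using a A by auto
  show "integrable M (\<lambda>x. (cmod (indicator A x *\<^sub>R u x))\<^sup>2)"
  proof (rule Bochner_Integration.integrable_bound[OF _ _ AE_I2])
    show "integrable M (\<lambda>x. (cmod (u x))\<^sup>2)" using a by auto
    show "(\<lambda>x. (cmod (indicator A x *\<^sub>R u x))\<^sup>2) \<in> borel_measurable M" using meas_sq[OF m] .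
    fix x show "norm ((cmod (indicator A x *\<^sub>R u x))\<^sup>2) \<le> norm ((cmod (u x))\<^sup>2)"
      by (simp split: split_indicator)
  qed
qed

lemma sqi_zero: "sqi M (\<lambda>x. 0)" unfolding sqi_def by auto

lemma sqi_sum: "finite S \<Longrightarrow> (\<And>i. i \<in> S \<Longrightarrow> sqi M (f i)) \<Longrightarrow> sqi M (\<lambda>x. \<Sum>i\<in>S. f i x)"
  by (induction S rule: finite_induct) (auto intro: sqi_add sqi_zero)

lemma prod_le_sq: "cmod (a * b) \<le> (cmod a)\<^sup>2 + (cmod b)\<^sup>2"
proof -
  have "2 * (cmod a * cmod b) \<le> (cmod a)\<^sup>2 + (cmod b)\<^sup>2"
  proof -
    have "0 \<le> (cmod a - cmod b)\<^sup>2" by simp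
    thus ?thesis unfolding power2_diff by linarith
  qed
  moreover have "0 \<le> cmod a * cmod b" by simp
  ultimately show ?thesis unfolding norm_mult by linarith
qed

lemma sqi_prod_int: "sqi M u \<Longrightarrow> sqi M v \<Longrightarrow> integrable M (\<lambda>x. u x * v x)"
  unfolding sqi_def
proof (rule Bochner_Integration.integrable_bound[OF _ _ AE_I2])
  assume a: "u \<in> borel_measurable M \<and> integrable M (\<lambda>x. (cmod (u x))\<^sup>2)"
     "v \<in> borel_measurable M \<and> integrable M (\<lambda>x. (cmod (v x))\<^sup>2)"
  show "integrable M (\<lambda>x. (cmod (u x))\<^sup>2 + (cmod (v x))\<^sup>2)" using a by auto
  show "(\<lambda>x. u x * v x) \<in> borel_measurable M" using a by auto
  fix x show "norm (u x * v x) \<le> norm ((cmod (u x))\<^sup>2 + (cmod (v x))\<^sup>2)"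
    using prod_le_sq[of "u x" "v x"] by simp
qed

definition indep :: "'a measure \<Rightarrow> complex set \<Rightarrow> nat \<Rightarrow> (nat \<Rightarrow> 'a \<Rightarrow> complex) \<Rightarrow> bool" where
  "indep M K m f \<longleftrightarrow> (\<forall>i<m. L2_scalar M K (f i)) \<and>
      (\<forall>c. (\<forall>i<m. c i \<in> K) \<longrightarrow> (AE x in M. (\<Sum>i<m. c i * f i x) = 0)
             \<longrightarrow> (\<forall>i<m. c i = 0))"

lemma L2_dim_alt: "L2_dim M K = Sup {enat m | m. \<exists>f. indep M K m f}"
  unfolding L2_dim_def indep_def by simp

lemma zero_in_K: "field_choice K \<Longrightarrow> 0 \<in> K"
  unfolding field_choice_def by auto

lemma sum_in_K: "field_choice K \<Longrightarrow> (\<And>i. i \<in> S \<Longrightarrow> c i \<in> K) \<Longrightarrow> sum c S \<in> K"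
  unfolding field_choice_def by (auto intro: sum_in_Reals)

lemma indep_mono:
  assumes K: "field_choice K" and ind: "indep M K m f" and le: "m' \<le> m"
  shows "indep M K m' f"
  unfolding indep_def
proof (intro conjI allI impI)
  show "\<And>i. i < m' \<Longrightarrow> L2_scalar M K (f i)" using ind le unfolding indep_def by auto
  fix c i assume cK: "\<forall>i<m'. c i \<in> K" and ae: "AE x in M. (\<Sum>i<m'. c i * f i x) = 0" and i: "i < m'"
  define c' where "c' i = (if i < m' then c i else 0)" for i
  have "\<forall>i<m. c' i \<in> K" using cK zero_in_K[OF K] unfolding c'_def by auto
  moreover have "AE x in M. (\<Sum>i<m. c' i * f i x) = 0"
  proof -
    have "(\<Sum>i<m. c' i * f i x) = (\<Sum>i<m'. c i * f i x)" for x
    proof -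
      have "(\<Sum>i<m. c' i * f i x) = (\<Sum>i<m'. c' i * f i x)"
        by (rule sum.mono_neutral_right) (use le in \<open>auto simp: c'_def\<close>)
      also have "\<dots> = (\<Sum>i<m'. c i * f i x)" by (simp add: c'_def)
      finally show ?thesis .
    qed
    thus ?thesis using ae by simp
  qed
  ultimately have z: "\<forall>i<m. c' i = 0" using ind unfolding indep_def by blast
  have "i < m" using i le by simp
  with z i show "c i = 0" unfolding c'_def by auto
qed

lemma dim_pick:
  assumes K: "field_choice K"
  shows "\<exists>m f. indep M K m f \<and> (L2_dim M K \<le> enat m \<or> n \<le> m)"
proof (cases "\<exists>m f. indep M K m f \<and> n \<le> m")
  case True thus ?thesis by blast
next
  case False
  let ?S = "{enat m | m. \<exists>f. indep M K m f}"
  have sub: "?S \<subseteq> enat ` {..<n}" using False by force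
  hence fin: "finite ?S" by (rule finite_subset) auto
  have "indep M K 0 f" for f unfolding indep_def by simp
  hence ne: "?S \<noteq> {}" by blast
  have "Sup ?S \<in> ?S" using Max_in[OF fin ne] cSup_eq_Max[OF fin ne] by simp
  then obtain m f where "Sup ?S = enat m" "indep M K m f" by blast
  thus ?thesis unfolding L2_dim_alt by auto
qed

lemma sum_enat: "(\<Sum>j\<in>S. enat (m j)) = enat (\<Sum>j\<in>S. m j)"
  by (induction S rule: infinite_finite_induct) (auto simp: zero_enat_def)

lemma family_exists:
  fixes M :: "'a measure" and Y :: "nat \<Rightarrow> 'a set"
  assumes K: "field_choice K"
    and Ys: "\<forall>j\<in>{1..l}. Y j \<in> sets M"
    and disj: "\<forall>j\<in>{1..l}. \<forall>k\<in>{1..l}. j \<noteq> k \<longrightarrow> Y j \<inter> Y k = {}"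
    and dim: "(\<Sum>j\<in>{1..l}. L2_dim (restrict_space M (Y j)) K) \<ge> enat CARD('n::finite)"
  shows "\<exists>g :: 'n \<Rightarrow> 'a \<Rightarrow> complex. (\<forall>k. sqi M (g k)) \<and> (\<forall>k. \<forall>x\<in>space M. g k x \<in> K)
      \<and> (\<forall>k x. g k x \<noteq> 0 \<longrightarrow> (\<exists>j\<in>{1..l}. x \<in> Y j))
      \<and> (\<forall>c. (\<forall>k. c k \<in> K) \<longrightarrow> (AE x in M. (\<Sum>k\<in>UNIV. c k * g k x) = 0) \<longrightarrow> (\<forall>k. c k = 0))"
proof -
  let ?n = "CARD('n)"
  have "\<forall>j. \<exists>m f. indep (restrict_space M (Y j)) K m f \<and>
          (L2_dim (restrict_space M (Y j)) K \<le> enat m \<or> ?n \<le> m)"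
    using dim_pick[OF K] by blast
  then obtain m f where mf: "\<And>j. indep (restrict_space M (Y j)) K (m j) (f j)"
    and mle: "\<And>j. L2_dim (restrict_space M (Y j)) K \<le> enat (m j) \<or> ?n \<le> m j"
    by metis
  define I where "I = Sigma {1..l} (\<lambda>j. {..<m j})"
  have finI: "finite I" unfolding I_def by auto
  have cardI: "card I = (\<Sum>j\<in>{1..l}. m j)" unfolding I_def by (simp add: card_SigmaI)
  have nle: "?n \<le> card I"
  proof (cases "\<exists>j\<in>{1..l}. ?n \<le> m j")
    case True
    then obtain j where j: "j \<in> {1..l}" "?n \<le> m j" by blast
    have "m j \<le> (\<Sum>j\<in>{1..l}. m j)" by (rule member_le_sum) (use j in auto)
    thus ?thesis using j cardI by simp
  next
    case False
    hence "\<forall>j\<in>{1..l}. L2_dim (restrict_space M (Y j)) K \<le> enat (m j)" using mle by auto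
    hence "(\<Sum>j\<in>{1..l}. L2_dim (restrict_space M (Y j)) K) \<le> (\<Sum>j\<in>{1..l}. enat (m j))"
      by (intro sum_mono) auto
    also have "\<dots> = enat (\<Sum>j\<in>{1..l}. m j)" by (rule sum_enat)
    finally have le2: "(\<Sum>j\<in>{1..l}. L2_dim (restrict_space M (Y j)) K) \<le> enat (\<Sum>j\<in>{1..l}. m j)" .
    have "enat ?n \<le> enat (\<Sum>j\<in>{1..l}. m j)" using order_trans[OF dim le2] .
    thus ?thesis using cardI by simp
  qed
  obtain e :: "'n \<Rightarrow> nat \<times> nat" where e: "e ` UNIV \<subseteq> I" "inj_on e UNIV"
    using card_le_inj[OF _ finI nle] by auto
  have eI: "fst (e k) \<in> {1..l}" "snd (e k) < m (fst (e k))" for k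
  proof -
    have "e k \<in> I" using e(1) by blast
    thus "fst (e k) \<in> {1..l}" "snd (e k) < m (fst (e k))" unfolding I_def by (cases "e k"; auto)+
  qed
  define g where "g k x = indicator (Y (fst (e k))) x *\<^sub>R f (fst (e k)) (snd (e k)) x" for k x
  have YM: "Y j \<inter> space M \<in> sets M" if "j \<in> {1..l}" for j using Ys that by auto
  have L2f: "L2_scalar (restrict_space M (Y (fst (e k)))) K (f (fst (e k)) (snd (e k)))" for k
    using mf[of "fst (e k)"] eI[of k] unfolding indep_def by auto
  have G1: "sqi M (g k)" for k
  proof -
    let ?j = "fst (e k)" and ?i = "snd (e k)"
    have a: "f ?j ?i \<in> borel_measurable (restrict_space M (Y ?j))"
      "integrable (restrict_space M (Y ?j)) (\<lambda>x. (cmod (f ?j ?i x))\<^sup>2)"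
      using L2f[of k] unfolding L2_scalar_def by auto
    have "g k \<in> borel_measurable M"
      using a(1) borel_measurable_restrict_space_iff[OF YM[OF eI(1)]] unfolding g_def by auto
    moreover have "integrable M (\<lambda>x. indicator (Y ?j) x *\<^sub>R (cmod (f ?j ?i x))\<^sup>2)"
      by (rule iffD1[OF integrable_restrict_space[OF YM[OF eI(1)]] a(2)])
    moreover have "(\<lambda>x. indicator (Y ?j) x *\<^sub>R (cmod (f ?j ?i x))\<^sup>2) = (\<lambda>x. (cmod (g k x))\<^sup>2)"
      unfolding g_def by (auto split: split_indicator)
    ultimately show ?thesis unfolding sqi_def by simp
  qed
  have G2: "g k x \<in> K" if "x \<in> space M" for k x
  proof (cases "x \<in> Y (fst (e k))")
    case True
    hence "x \<in> space (restrict_space M (Y (fst (e k))))" using that by (simp add: space_restrict_space)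
    hence "f (fst (e k)) (snd (e k)) x \<in> K" using L2f[of k] unfolding L2_scalar_def by auto
    thus ?thesis using True unfolding g_def by simp
  next
    case False thus ?thesis unfolding g_def using zero_in_K[OF K] by simp
  qed
  have G3: "\<exists>j\<in>{1..l}. x \<in> Y j" if "g k x \<noteq> 0" for k x
  proof -
    have "x \<in> Y (fst (e k))" by (rule ccontr) (use that in \<open>simp add: g_def\<close>)
    thus ?thesis using eI(1)[of k] by blast
  qed
  have G4: "\<forall>k. c k = 0" if cK: "\<forall>k. c k \<in> K" and ae: "AE x in M. (\<Sum>k\<in>UNIV. c k * g k x) = 0" for c
  proof
    fix k0
    define j0 where "j0 = fst (e k0)"
    define i0 where "i0 = snd (e k0)"
    have j0: "j0 \<in> {1..l}" "i0 < m j0" using eI[of k0] unfolding j0_def i0_def by auto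
    define d where "d i = (\<Sum>k\<in>{k. e k = (j0, i)}. c k)" for i
    have dK: "\<forall>i<m j0. d i \<in> K" unfolding d_def using cK by (blast intro: sum_in_K[OF K])
    have eq: "(\<Sum>k\<in>UNIV. c k * g k x) = (\<Sum>i<m j0. d i * f j0 i x)" if x: "x \<in> Y j0" for x
    proof -
      let ?S = "{k. fst (e k) = j0}"
      have "(\<Sum>k\<in>UNIV. c k * g k x) = (\<Sum>k\<in>UNIV. if fst (e k) = j0 then c k * f j0 (snd (e k)) x else 0)"
      proof (rule sum.cong)
        fix k
        show "c k * g k x = (if fst (e k) = j0 then c k * f j0 (snd (e k)) x else 0)"
        proof (cases "fst (e k) = j0")
          case True thus ?thesis using x unfolding g_def by simp
        next
          case False
          hence "x \<notin> Y (fst (e k))" using disj eI(1)[of k] j0(1) x by blast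
          thus ?thesis using False unfolding g_def by simp
        qed
      qed simp
      also have "\<dots> = (\<Sum>k\<in>?S. c k * f j0 (snd (e k)) x)"
        using sum.inter_filter[of UNIV "\<lambda>k. c k * f j0 (snd (e k)) x" "\<lambda>k. fst (e k) = j0"] by simp
      also have "\<dots> = (\<Sum>i\<in>{..<m j0}. \<Sum>k\<in>{k\<in>?S. snd (e k) = i}. c k * f j0 (snd (e k)) x)"
        by (rule sum.group[symmetric]) (use eI in auto)
      also have "\<dots> = (\<Sum>i<m j0. d i * f j0 i x)"
      proof (rule sum.cong)
        fix i
        have "{k\<in>?S. snd (e k) = i} = {k. e k = (j0, i)}" by (auto simp: prod_eq_iff)
        hence "(\<Sum>k\<in>{k\<in>?S. snd (e k) = i}. c k * f j0 (snd (e k)) x) = (\<Sum>k\<in>{k. e k = (j0, i)}. c k * f j0 i x)"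
          by (intro sum.cong) auto
        thus "(\<Sum>k\<in>{k\<in>?S. snd (e k) = i}. c k * f j0 (snd (e k)) x) = d i * f j0 i x"
          unfolding d_def by (simp add: sum_distrib_right)
      qed simp
      finally show ?thesis .
    qed
    have "AE x in restrict_space M (Y j0). (\<Sum>i<m j0. d i * f j0 i x) = 0"
      unfolding AE_restrict_space_iff[OF YM[OF j0(1)]] using ae eq by auto
    hence "\<forall>i<m j0. d i = 0" using mf[of j0] dK unfolding indep_def by blast
    hence "d i0 = 0" using j0 by simp
    moreover have "{k. e k = (j0, i0)} = {k0}"
      using e(2) unfolding j0_def i0_def by (auto simp: inj_on_def)
    ultimately show "c k0 = 0" unfolding d_def by simp
  qed
  show ?thesis
    by (rule exI[of _ g]) (use G1 G2 G3 G4 in blast)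
qed


lemma vec_meas:
  assumes m: "\<And>i. (\<lambda>x. \<phi> i x) \<in> borel_measurable M"
  shows "(\<lambda>x. (\<chi> i. \<phi> i x) :: complex ^ 'n::finite) \<in> borel_measurable M"
proof (rule iffD2[OF borel_measurable_euclidean_space], rule ballI)
  fix b :: "complex ^ 'n" assume "b \<in> Basis"
  hence "\<exists>i. \<exists>u\<in>Basis. b = axis i u" unfolding Basis_vec_def by (simp only: UN_iff singleton_iff) blast
  then obtain i u where b: "b = axis i u" by blast
  have "\<And>x. (\<chi> i. \<phi> i x) \<bullet> b = \<phi> i x \<bullet> u" unfolding b inner_axis vec_lambda_beta by (rule refl)
  moreover have "(\<lambda>x. \<phi> i x \<bullet> u) \<in> borel_measurable M" by (intro borel_measurable_inner m borel_measurable_const)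
  ultimately show "(\<lambda>x. (\<chi> i. \<phi> i x) \<bullet> b) \<in> borel_measurable M" by simp
qed
lemma norm_sq_vec: "(norm (v::complex^'n::finite))\<^sup>2 = (\<Sum>i\<in>UNIV. (cmod (v$i))\<^sup>2)"
proof -
  have "(norm v)\<^sup>2 = (sqrt (\<Sum>i\<in>UNIV. (norm (v$i))\<^sup>2))\<^sup>2" by (simp only: norm_vec_def L2_set_def)
  also have "\<dots> = (\<Sum>i\<in>UNIV. (norm (v$i))\<^sup>2)" by (rule real_sqrt_pow2) (intro sum_nonneg zero_le_power2)
  finally show ?thesis .
qed
lemma L2_vec_from:
  fixes \<phi> :: "'n::finite \<Rightarrow> 'a \<Rightarrow> complex"
  assumes sq: "\<And>i. sqi M (\<phi> i)" and vK: "\<And>i x. x \<in> space M \<Longrightarrow> \<phi> i x \<in> K"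
  shows "L2_vec M K (\<lambda>x. \<chi> i. \<phi> i x)"
  unfolding L2_vec_def in_Kn_def
proof (intro conjI ballI allI)
  show "(\<lambda>x. \<chi> i. \<phi> i x) \<in> borel_measurable M" by (rule vec_meas) (use sq[unfolded sqi_def] in blast)
  show "\<And>x i. x \<in> space M \<Longrightarrow> (\<chi> i. \<phi> i x) $ i \<in> K" unfolding vec_lambda_beta by (rule vK)
  show "integrable M (\<lambda>x. (norm (\<chi> i. \<phi> i x))\<^sup>2)"
  proof -
    have e: "(\<lambda>x. (norm (\<chi> i. \<phi> i x))\<^sup>2) = (\<lambda>x. \<Sum>i\<in>UNIV. (cmod (\<phi> i x))\<^sup>2)"
      by (intro ext) (simp only: norm_sq_vec vec_lambda_beta)
    have "integrable M (\<lambda>x. \<Sum>i\<in>UNIV. (cmod (\<phi> i x))\<^sup>2)"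
      by (rule Bochner_Integration.integrable_sum) (use sq[unfolded sqi_def] in blast)
    thus ?thesis unfolding e .
  qed
qed

lemma cs_ineq: "(cmod (cinner_vec v w))\<^sup>2 \<le> (norm v)\<^sup>2 * (norm w)\<^sup>2"
proof -
  have "cmod (cinner_vec v w) \<le> (\<Sum>i\<in>UNIV. cmod (v$i * cnj (w$i)))"
    unfolding cinner_vec_def by (rule norm_sum)
  also have "\<dots> = (\<Sum>i\<in>UNIV. \<bar>cmod (v$i)\<bar> * \<bar>cmod (w$i)\<bar>)" by (simp add: norm_mult)
  also have "\<dots> \<le> L2_set (\<lambda>i. cmod (v$i)) UNIV * L2_set (\<lambda>i. cmod (w$i)) UNIV"
    by (rule L2_set_mult_ineq)
  also have "\<dots> = norm v * norm w" unfolding norm_vec_def by simp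
  finally have "cmod (cinner_vec v w) \<le> norm v * norm w" .
  hence "(cmod (cinner_vec v w))\<^sup>2 \<le> (norm v * norm w)\<^sup>2" by (rule power_mono) simp
  thus ?thesis by (simp only: power_mult_distrib)
qed

lemma K_cases: "field_choice K \<Longrightarrow> (K = \<real> \<Longrightarrow> P) \<Longrightarrow> (K = UNIV \<Longrightarrow> P) \<Longrightarrow> P"
  unfolding field_choice_def by blast

lemma K_cnj: "field_choice K \<Longrightarrow> z \<in> K \<Longrightarrow> cnj z \<in> K"
  by (erule K_cases) (auto simp: Reals_cnj_iff)

lemma K_mult: "field_choice K \<Longrightarrow> z \<in> K \<Longrightarrow> w \<in> K \<Longrightarrow> z * w \<in> K"
  by (erule K_cases) auto

lemma K_add: "field_choice K \<Longrightarrow> z \<in> K \<Longrightarrow> w \<in> K \<Longrightarrow> z + w \<in> K"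
  by (erule K_cases) auto

lemma K_diff: "field_choice K \<Longrightarrow> z \<in> K \<Longrightarrow> w \<in> K \<Longrightarrow> z - w \<in> K"
  by (erule K_cases) auto

lemma K_divide: "field_choice K \<Longrightarrow> z \<in> K \<Longrightarrow> w \<in> K \<Longrightarrow> z / w \<in> K"
  by (erule K_cases) auto

lemma K_of_real: "field_choice K \<Longrightarrow> complex_of_real r \<in> K"
  by (erule K_cases) auto

lemma cont_vec_nth [continuous_intros]: "continuous_on S (\<lambda>v::'b::real_normed_vector^'n::finite. v$i)"
  by (rule linear_continuous_on[OF bounded_linear_vec_nth])

lemma norm_axis_c: "norm (axis i (1::complex) :: complex^'n::finite) = 1"
proof -
  have "(norm (axis i (1::complex) :: complex^'n))\<^sup>2 = (\<Sum>j\<in>UNIV. (cmod ((axis i 1 :: complex^'n)$j))\<^sup>2)"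
    by (rule norm_sq_vec)
  also have "\<dots> = (\<Sum>j\<in>UNIV. if j = i then 1 else 0)" by (intro sum.cong) (auto simp: axis_def)
  also have "\<dots> = 1" by simp
  finally have "(norm (axis i (1::complex) :: complex^'n))\<^sup>2 = 1" .
  thus ?thesis using norm_ge_zero[of "axis i (1::complex) :: complex^'n"] by (simp add: power2_eq_1_iff)
qed

lemma int_double_sum:
  fixes F :: "'i \<Rightarrow> 'k \<Rightarrow> 'a \<Rightarrow> complex"
  assumes "\<And>i k. integrable M (F i k)"
  shows "(integral\<^sup>L M (\<lambda>x. \<Sum>i\<in>A. \<Sum>k\<in>B. c i k * F i k x)) = (\<Sum>i\<in>A. \<Sum>k\<in>B. c i k * (integral\<^sup>L M (\<lambda>x. F i k x)))"
proof -
  have "(integral\<^sup>L M (\<lambda>x. \<Sum>i\<in>A. \<Sum>k\<in>B. c i k * F i k x)) = (\<Sum>i\<in>A. integral\<^sup>L M (\<lambda>x. \<Sum>k\<in>B. c i k * F i k x))"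
    by (rule Bochner_Integration.integral_sum) (intro Bochner_Integration.integrable_sum integrable_mult_right assms)
  also have "\<dots> = (\<Sum>i\<in>A. \<Sum>k\<in>B. integral\<^sup>L M (\<lambda>x. c i k * F i k x))"
    by (intro sum.cong refl Bochner_Integration.integral_sum integrable_mult_right assms)
  also have "\<dots> = (\<Sum>i\<in>A. \<Sum>k\<in>B. c i k * (integral\<^sup>L M (\<lambda>x. F i k x)))"
    by (simp only: integral_mult_right_zero)
  finally show ?thesis .
qed

lemma frame_from_indep:
  fixes \<phi> :: "'n::finite \<Rightarrow> 'a \<Rightarrow> complex"
  assumes K: "field_choice K" and sq: "\<And>i. sqi M (\<phi> i)" and vK: "\<And>i x. x \<in> space M \<Longrightarrow> \<phi> i x \<in> K"
    and ind: "\<And>v. in_Kn K v \<Longrightarrow> (AE x in M. cinner_vec v (\<chi> i. \<phi> i x) = 0) \<Longrightarrow> v = 0"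
  shows "cont_frame M K (\<lambda>x. \<chi> i. \<phi> i x)"
proof -
  define \<psi> where "\<psi> v = (\<lambda>x. \<Sum>i\<in>UNIV. v$i * cnj (\<phi> i x))" for v :: "complex^'n"
  have \<psi>c: "cinner_vec v (\<chi> i. \<phi> i x) = \<psi> v x" for v x unfolding \<psi>_def cinner_vec_def by simp
  have sq\<psi>: "sqi M (\<psi> v)" for v unfolding \<psi>_def
    by (intro sqi_sum sqi_cmult sqi_cnj sq) simp
  have int\<psi>: "integrable M (\<lambda>x. (cmod (\<psi> v x))\<^sup>2)" for v using sq\<psi>[of v] unfolding sqi_def by blast
  define Q where "Q v = (integral\<^sup>L M (\<lambda>x. (cmod (\<psi> v x))\<^sup>2))" for v
  have nnQ: "(\<integral>\<^sup>+x. ennreal ((cmod (cinner_vec v (\<chi> i. \<phi> i x)))\<^sup>2) \<partial>M) = ennreal (Q v)" for v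
    unfolding \<psi>c Q_def by (rule nn_integral_eq_integral[OF int\<psi>]) simp
  have Q0: "0 \<le> Q v" for v unfolding Q_def by (rule Bochner_Integration.integral_nonneg_AE) simp
  have L2: "L2_vec M K (\<lambda>x. \<chi> i. \<phi> i x)" by (rule L2_vec_from[OF sq vK])
  define N where "N = (integral\<^sup>L M (\<lambda>x. (norm (\<chi> i. \<phi> i x))\<^sup>2))"
  have intN: "integrable M (\<lambda>x. (norm (\<chi> i. \<phi> i x))\<^sup>2)" using L2 unfolding L2_vec_def by blast
  have Qup: "Q v \<le> (norm v)\<^sup>2 * N" for v
  proof -
    have "Q v \<le> (integral\<^sup>L M (\<lambda>x. (norm v)\<^sup>2 * (norm (\<chi> i. \<phi> i x))\<^sup>2))"
      unfolding Q_def
    proof (rule Bochner_Integration.integral_mono[OF int\<psi>])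
      show "integrable M (\<lambda>x. (norm v)\<^sup>2 * (norm (\<chi> i. \<phi> i x))\<^sup>2)" by (rule integrable_mult_right[OF intN])
      fix x show "(cmod (\<psi> v x))\<^sup>2 \<le> (norm v)\<^sup>2 * (norm (\<chi> i. \<phi> i x))\<^sup>2"
        using cs_ineq[of v "\<chi> i. \<phi> i x"] unfolding \<psi>c .
    qed
    also have "\<dots> = (norm v)\<^sup>2 * N" unfolding N_def by (rule integral_mult_right_zero)
    finally show ?thesis .
  qed
  define G where "G i k = (integral\<^sup>L M (\<lambda>x. cnj (\<phi> i x) * \<phi> k x))" for i k
  have intG: "integrable M (\<lambda>x. cnj (\<phi> i x) * \<phi> k x)" for i k
    by (rule sqi_prod_int[OF sqi_cnj[OF sq] sq])
  have Qexp: "Q v = Re (\<Sum>i\<in>UNIV. \<Sum>k\<in>UNIV. v$i * cnj (v$k) * G i k)" for v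
  proof -
    have pt: "(cmod (\<psi> v x))\<^sup>2 = Re (\<Sum>i\<in>UNIV. \<Sum>k\<in>UNIV. v$i * cnj (v$k) * (cnj (\<phi> i x) * \<phi> k x))" for x
    proof -
      have "complex_of_real ((cmod (\<psi> v x))\<^sup>2) = \<psi> v x * cnj (\<psi> v x)" by (rule complex_norm_square)
      also have "\<dots> = (\<Sum>i\<in>UNIV. \<Sum>k\<in>UNIV. v$i * cnj (v$k) * (cnj (\<phi> i x) * \<phi> k x))"
        unfolding \<psi>_def cnj_sum sum_product by (intro sum.cong refl) (simp add: mult_ac)
      finally have "Re (complex_of_real ((cmod (\<psi> v x))\<^sup>2)) = Re (\<Sum>i\<in>UNIV. \<Sum>k\<in>UNIV. v$i * cnj (v$k) * (cnj (\<phi> i x) * \<phi> k x))"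
        by (rule arg_cong)
      thus ?thesis by (simp only: Re_complex_of_real)
    qed
    have "Q v = (integral\<^sup>L M (\<lambda>x. Re (\<Sum>i\<in>UNIV. \<Sum>k\<in>UNIV. v$i * cnj (v$k) * (cnj (\<phi> i x) * \<phi> k x))))"
      unfolding Q_def by (simp only: pt)
    also have "\<dots> = Re (integral\<^sup>L M (\<lambda>x. (\<Sum>i\<in>UNIV. \<Sum>k\<in>UNIV. v$i * cnj (v$k) * (cnj (\<phi> i x) * \<phi> k x))))"
      by (rule integral_Re) (intro Bochner_Integration.integrable_sum integrable_mult_right intG)
    also have "(integral\<^sup>L M (\<lambda>x. (\<Sum>i\<in>UNIV. \<Sum>k\<in>UNIV. v$i * cnj (v$k) * (cnj (\<phi> i x) * \<phi> k x))))
        = (\<Sum>i\<in>UNIV. \<Sum>k\<in>UNIV. v$i * cnj (v$k) * G i k)"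
      unfolding G_def by (rule int_double_sum[where F="\<lambda>i k x. cnj (\<phi> i x) * \<phi> k x", OF intG])
    finally show ?thesis .
  qed
  have contQ: "continuous_on UNIV Q"
  proof -
    have "Q = (\<lambda>v. Re (\<Sum>i\<in>UNIV. \<Sum>k\<in>UNIV. v$i * cnj (v$k) * G i k))" using Qexp by (intro ext)
    moreover have "continuous_on UNIV (\<lambda>v::complex^'n. Re (\<Sum>i\<in>UNIV. \<Sum>k\<in>UNIV. v$i * cnj (v$k) * G i k))"
      by (intro continuous_intros)
    ultimately show ?thesis by simp
  qed
  define S where "S = {v::complex^'n. in_Kn K v \<and> norm v = 1}"
  have compS: "compact S"
  proof (rule K_cases[OF K])
    assume "K = UNIV"
    hence "S = sphere 0 1" unfolding S_def in_Kn_def by auto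
    thus ?thesis by simp
  next
    assume KR: "K = \<real>"
    have "S = sphere 0 1 \<inter> {v. \<forall>i. Im (v$i) = 0}"
      unfolding S_def in_Kn_def KR complex_is_Real_iff by auto
    moreover have "closed {v::complex^'n. \<forall>i. Im (v$i) = 0}"
      by (intro closed_Collect_all closed_Collect_eq continuous_intros)
    ultimately show ?thesis by (simp add: compact_Int_closed)
  qed
  obtain i0 :: 'n where True by blast
  have "axis i0 1 \<in> S" unfolding S_def in_Kn_def using norm_axis_c[of i0] zero_in_K[OF K] K_of_real[OF K, of 1]
    by (auto simp: axis_def)
  hence neS: "S \<noteq> {}" by blast
  obtain v0 where v0: "v0 \<in> S" "\<And>y. y \<in> S \<Longrightarrow> Q v0 \<le> Q y"
    using continuous_attains_inf[OF compS neS continuous_on_subset[OF contQ]] by blast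
  define A where "A = Q v0"
  have Apos: "0 < A"
  proof (rule ccontr)
    assume "\<not> 0 < A"
    hence "Q v0 = 0" using Q0[of v0] unfolding A_def by linarith
    hence "AE x in M. (cmod (\<psi> v0 x))\<^sup>2 = 0"
      using integral_nonneg_eq_0_iff_AE[OF int\<psi>] unfolding Q_def by simp
    hence "AE x in M. cinner_vec v0 (\<chi> i. \<phi> i x) = 0"
      by eventually_elim (simp add: \<psi>c)
    hence "v0 = 0" using ind v0(1) unfolding S_def by blast
    thus False using v0(1) unfolding S_def by simp
  qed
  have Qhom: "Q (c *\<^sub>R v) = c\<^sup>2 * Q v" for c v
  proof -
    have "\<psi> (c *\<^sub>R v) x = of_real c * \<psi> v x" for x
      unfolding \<psi>_def vector_scaleR_component by (simp add: sum_distrib_left mult.assoc scaleR_conv_of_real)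
    hence "(cmod (\<psi> (c *\<^sub>R v) x))\<^sup>2 = c\<^sup>2 * (cmod (\<psi> v x))\<^sup>2" for x
      by (simp add: norm_mult power_mult_distrib)
    thus ?thesis unfolding Q_def by simp
  qed
  have Qlow: "A * (norm v)\<^sup>2 \<le> Q v" if vK': "in_Kn K v" for v
  proof (cases "v = 0")
    case True thus ?thesis using Q0[of v] by simp
  next
    case False
    hence np: "0 < (norm v)\<^sup>2" by simp
    let ?w = "(1 / norm v) *\<^sub>R v"
    have "in_Kn K ?w" using vK' unfolding in_Kn_def vector_scaleR_component
      by (auto simp: scaleR_conv_of_real intro!: K_divide[OF K] K_of_real[OF K])
    moreover have "norm ?w = 1" using False by simp
    ultimately have "?w \<in> S" unfolding S_def by blast
    hence "A \<le> Q ?w" using v0(2) unfolding A_def by blast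
    also have "Q ?w = Q v / (norm v)\<^sup>2" unfolding Qhom by (simp add: power_divide)
    finally have "A \<le> Q v / (norm v)\<^sup>2" .
    thus ?thesis using pos_le_divide_eq[OF np] by simp
  qed
  have part1: "\<forall>x\<in>space M. in_Kn K (\<chi> i. \<phi> i x)" unfolding in_Kn_def using vK by simp
  have part2: "\<forall>i. (\<lambda>x. (\<chi> i. \<phi> i x) $ i) \<in> borel_measurable M" using sq unfolding sqi_def by simp
  have part3: "\<forall>v. in_Kn K v \<longrightarrow>
        ennreal (A * (norm v)\<^sup>2) \<le> (\<integral>\<^sup>+ x. ennreal ((cmod (cinner_vec v (\<chi> i. \<phi> i x)))\<^sup>2) \<partial>M) \<and>
        (\<integral>\<^sup>+ x. ennreal ((cmod (cinner_vec v (\<chi> i. \<phi> i x)))\<^sup>2) \<partial>M) \<le> ennreal (max A N * (norm v)\<^sup>2)"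
  proof (intro allI impI conjI)
    fix v :: "complex^'n" assume v: "in_Kn K v"
    show "ennreal (A * (norm v)\<^sup>2) \<le> (\<integral>\<^sup>+ x. ennreal ((cmod (cinner_vec v (\<chi> i. \<phi> i x)))\<^sup>2) \<partial>M)"
      unfolding nnQ using Qlow[OF v] by (rule ennreal_leI)
    have "Q v \<le> max A N * (norm v)\<^sup>2"
      using Qup[of v] mult_right_mono[OF max.cobounded2[of N A] zero_le_power2[of "norm v"]] by (simp add: mult.commute)
    thus "(\<integral>\<^sup>+ x. ennreal ((cmod (cinner_vec v (\<chi> i. \<phi> i x)))\<^sup>2) \<partial>M) \<le> ennreal (max A N * (norm v)\<^sup>2)"
      unfolding nnQ by (rule ennreal_leI)
  qed
  show ?thesis
    unfolding cont_frame_def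
    apply (intro conjI part1 part2)
    apply (rule exI[of _ A], rule exI[of _ "max A N"])
    using Apos part3 by auto
qed


lemma int_in_K:
  fixes f :: "'a \<Rightarrow> complex"
  assumes K: "field_choice K" and fK: "\<And>x. x \<in> space M \<Longrightarrow> f x \<in> K"
  shows "integral\<^sup>L M f \<in> K"
proof (rule K_cases[OF K])
  assume "K = UNIV" thus ?thesis by simp
next
  assume KR: "K = \<real>"
  have "integral\<^sup>L M f = integral\<^sup>L M (\<lambda>x. complex_of_real (Re (f x)))"
    by (rule Bochner_Integration.integral_cong) (use fK KR in auto)
  also have "\<dots> = complex_of_real (integral\<^sup>L M (\<lambda>x. Re (f x)))" by (rule integral_complex_of_real)
  finally show ?thesis using KR by simp
qed

theorem proposition5p8:
  fixes M :: "'a measure" and K :: "complex set" and l :: nat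
    and X Y :: "nat \<Rightarrow> 'a set" and h :: "'a \<Rightarrow> complex"
  assumes "field_choice K"
    and "l \<ge> 1"
    and "\<forall>j\<in>{1..l}. X j \<in> sets M"
    and "\<forall>j\<in>{1..l}. \<forall>k\<in>{1..l}. j \<noteq> k \<longrightarrow> X j \<inter> X k = {}"
    and "(\<Union>j\<in>{1..l}. X j) = space M"
    and "L2_scalar M K h"
    and "\<forall>j\<in>{1..l}. Y j \<in> sets M \<and> Y j \<subseteq> X j"
    and "\<forall>j\<in>{1..l}. emeasure M ((X j - Y j) \<inter> {x\<in>space M. h x \<noteq> 0}) > 0"
    and "(\<Sum>j\<in>{1..l}. L2_dim (restrict_space M (Y j)) K) \<ge> enat CARD('n::finite)"
  shows "\<forall>D :: nat \<Rightarrow> complex ^ 'n. (\<forall>j\<in>{1..l}. in_Kn K (D j)) \<longrightarrow>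
           (\<exists>\<Phi> :: 'a \<Rightarrow> complex ^ 'n. L2_vec M K \<Phi> \<and> (\<forall>j\<in>{1..l}. W_op M h X \<Phi> j = D j)
              \<and> cont_frame M K \<Phi>)"
proof (intro allI impI)
  note K = assms(1)
  note Xs = assms(3) and Xdisj = assms(4) and hL2 = assms(6) and YX = assms(7) and pos = assms(8)
  fix D :: "nat \<Rightarrow> complex ^ 'n" assume DK: "\<forall>j\<in>{1..l}. in_Kn K (D j)"
  have Ys: "\<forall>j\<in>{1..l}. Y j \<in> sets M" using YX by simp
  have Ydisj: "\<forall>j\<in>{1..l}. \<forall>k\<in>{1..l}. j \<noteq> k \<longrightarrow> Y j \<inter> Y k = {}"
  proof (intro ballI impI)
    fix j k assume jk: "j \<in> {1..l}" "k \<in> {1..l}" "j \<noteq> k"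
    have "Y j \<subseteq> X j" "Y k \<subseteq> X k" using YX jk by auto
    moreover have "X j \<inter> X k = {}" using Xdisj jk by auto
    ultimately show "Y j \<inter> Y k = {}" by blast
  qed
  obtain g :: "'n \<Rightarrow> 'a \<Rightarrow> complex" where G1': "\<forall>k. sqi M (g k)" and G2': "\<forall>k. \<forall>x\<in>space M. g k x \<in> K"
      and G3': "\<forall>k x. g k x \<noteq> 0 \<longrightarrow> (\<exists>j\<in>{1..l}. x \<in> Y j)"
      and G4': "\<forall>c. (\<forall>k. c k \<in> K) \<longrightarrow> (AE x in M. (\<Sum>k\<in>UNIV. c k * g k x) = 0) \<longrightarrow> (\<forall>k. c k = 0)"
    using family_exists[OF K Ys Ydisj assms(9)] by (elim exE conjE) (rule that)
  have G1: "\<And>k. sqi M (g k)" using G1' by blast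
  have G2: "\<And>k x. x \<in> space M \<Longrightarrow> g k x \<in> K" using G2' by blast
  have G3: "\<And>k x. g k x \<noteq> 0 \<Longrightarrow> \<exists>j\<in>{1..l}. x \<in> Y j" using G3' by blast
  have G4: "\<And>c. \<forall>k. c k \<in> K \<Longrightarrow> (AE x in M. (\<Sum>k\<in>UNIV. c k * g k x) = 0) \<Longrightarrow> \<forall>k. c k = 0"
    using G4' by blast
  have hmeas: "h \<in> borel_measurable M" and hK: "\<And>x. x \<in> space M \<Longrightarrow> h x \<in> K"
    and hint: "integrable M (\<lambda>x. (cmod (h x))\<^sup>2)" using hL2 unfolding L2_scalar_def by auto
  have sqh: "sqi M h" unfolding sqi_def using hmeas hint by blast
  define Z where "Z j = X j - Y j" for j
  have Zs: "Z j \<in> sets M" if "j \<in> {1..l}" for j unfolding Z_def using Xs YX that by blast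
  have ZX: "Z j \<subseteq> X j" for j unfolding Z_def by blast
  define s where "s j = integral\<^sup>L M (\<lambda>x. indicator (Z j) x *\<^sub>R (cmod (h x))\<^sup>2)" for j
  have intZ: "integrable M (\<lambda>x. indicator (Z j) x *\<^sub>R (cmod (h x))\<^sup>2)" if "j \<in> {1..l}" for j
    by (rule integrable_mult_indicator[OF Zs[OF that] hint])
  have spos: "0 < s j" if j: "j \<in> {1..l}" for j
  proof -
    have s0: "0 \<le> s j" unfolding s_def by (rule Bochner_Integration.integral_nonneg_AE) (simp split: split_indicator)
    have "s j \<noteq> 0"
    proof
      assume "s j = 0"
      hence "AE x in M. indicator (Z j) x *\<^sub>R (cmod (h x))\<^sup>2 = 0"
        using integral_nonneg_eq_0_iff_AE[OF intZ[OF j]] unfolding s_def by (simp split: split_indicator)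
      hence ae: "AE x in M. \<not> (x \<in> Z j \<and> h x \<noteq> 0)"
        by eventually_elim (auto split: split_indicator)
      have hs: "{x\<in>space M. h x \<noteq> 0} \<in> sets M" using hmeas by measurable
      have N: "(X j - Y j) \<inter> {x\<in>space M. h x \<noteq> 0} \<in> sets M"
        using Zs[OF j] hs unfolding Z_def by (rule sets.Int)
      have eqN: "{x\<in>space M. \<not> \<not> (x \<in> Z j \<and> h x \<noteq> 0)} = (X j - Y j) \<inter> {x\<in>space M. h x \<noteq> 0}"
        unfolding Z_def by auto
      have "emeasure M ((X j - Y j) \<inter> {x\<in>space M. h x \<noteq> 0}) = 0"
        using AE_iff_measurable[where P="\<lambda>x. \<not> (x \<in> Z j \<and> h x \<noteq> 0)", OF N eqN] ae by simp
      moreover have "0 < emeasure M ((X j - Y j) \<inter> {x\<in>space M. h x \<noteq> 0})" using pos j by blast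
      ultimately show False by simp
    qed
    thus ?thesis using s0 by simp
  qed
  define IG where "IG j i = integral\<^sup>L M (\<lambda>x. indicator (X j) x *\<^sub>R (h x * g i x))" for j i
  define b where "b j i = (D j $ i - IG j i) / complex_of_real (s j)" for j i
  have IGK: "IG j i \<in> K" for j i unfolding IG_def
    by (rule int_in_K[OF K]) (auto simp: scaleR_conv_of_real intro!: K_mult[OF K] K_of_real[OF K] hK G2)
  have bK: "b j i \<in> K" if "j \<in> {1..l}" for j i unfolding b_def
    using DK that unfolding in_Kn_def by (auto intro!: K_divide[OF K] K_diff[OF K] K_of_real[OF K] IGK)
  define \<phi> where "\<phi> i x = g i x + (\<Sum>j\<in>{1..l}. indicator (Z j) x *\<^sub>R (b j i * cnj (h x)))" for i x
  have sq\<phi>: "sqi M (\<phi> i)" for i unfolding \<phi>_def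
    by (intro sqi_add G1 sqi_sum sqi_ind sqi_cmult sqi_cnj sqh Zs) auto
  have \<phi>K: "\<phi> i x \<in> K" if x: "x \<in> space M" for i x unfolding \<phi>_def
    using x by (auto simp: scaleR_conv_of_real intro!: K_add[OF K] sum_in_K[OF K] K_mult[OF K] K_of_real[OF K]
        G2 bK K_cnj[OF K] hK)
  define \<Phi> where "\<Phi> = (\<lambda>x. \<chi> i. \<phi> i x)"
  have \<phi>Y: "\<phi> i x = g i x" if "j \<in> {1..l}" "x \<in> Y j" for i x j
  proof -
    have "x \<notin> Z j'" if "j' \<in> {1..l}" for j'
    proof (cases "j' = j")
      case True thus ?thesis using \<open>x \<in> Y j\<close> unfolding Z_def by blast
    next
      case False
      hence "X j \<inter> X j' = {}" using Xdisj \<open>j \<in> {1..l}\<close> that by blast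
      thus ?thesis using \<open>x \<in> Y j\<close> YX \<open>j \<in> {1..l}\<close> unfolding Z_def by blast
    qed
    thus ?thesis unfolding \<phi>_def by simp
  qed
  have L2: "L2_vec M K \<Phi>" unfolding \<Phi>_def by (rule L2_vec_from[OF sq\<phi> \<phi>K])
  have W: "W_op M h X \<Phi> j = D j" if j: "j \<in> {1..l}" for j
  proof -
    have "integral\<^sup>L M (\<lambda>x. indicator (X j) x *\<^sub>R (h x * \<phi> i x)) = D j $ i" for i
    proof -
      have pt: "indicator (X j) x *\<^sub>R (h x * \<phi> i x) =
          indicator (X j) x *\<^sub>R (h x * g i x) + b j i * complex_of_real (indicator (Z j) x *\<^sub>R (cmod (h x))\<^sup>2)" for x
      proof (cases "x \<in> X j")
        case True
        have "(\<Sum>j'\<in>{1..l}. indicator (Z j') x *\<^sub>R (b j' i * cnj (h x))) =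
              (\<Sum>j'\<in>{1..l}. if j' = j then indicator (Z j) x *\<^sub>R (b j i * cnj (h x)) else 0)"
        proof (rule sum.cong[OF refl])
          fix j' assume j': "j' \<in> {1..l}"
          show "indicator (Z j') x *\<^sub>R (b j' i * cnj (h x)) = (if j' = j then indicator (Z j) x *\<^sub>R (b j i * cnj (h x)) else 0)"
          proof (cases "j' = j")
            case False
            hence "X j \<inter> X j' = {}" using Xdisj j j' by blast
            hence "x \<notin> Z j'" using True ZX by blast
            thus ?thesis using False by simp
          qed simp
        qed
        also have "\<dots> = indicator (Z j) x *\<^sub>R (b j i * cnj (h x))" using j by simp
        finally have sum_eq: "(\<Sum>j'\<in>{1..l}. indicator (Z j') x *\<^sub>R (b j' i * cnj (h x))) = indicator (Z j) x *\<^sub>R (b j i * cnj (h x))" .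
        have hh: "h x * cnj (h x) = complex_of_real ((cmod (h x))\<^sup>2)" by (rule complex_norm_square[symmetric])
        have hh': "h x * cnj (h x) = (complex_of_real (cmod (h x)))\<^sup>2" using hh by (simp only: of_real_power)
        show ?thesis unfolding \<phi>_def sum_eq using True
          by (cases "x \<in> Z j") (simp_all add: distrib_left mult_ac hh[symmetric] hh')
      next
        case False
        hence "x \<notin> Z j" using ZX by blast
        thus ?thesis using False by simp
      qed
      have intA: "integrable M (\<lambda>x. indicator (X j) x *\<^sub>R (h x * g i x))"
        using Xs j by (intro integrable_mult_indicator sqi_prod_int[OF sqh G1]) auto
      have "integral\<^sup>L M (\<lambda>x. indicator (X j) x *\<^sub>R (h x * \<phi> i x)) =
          integral\<^sup>L M (\<lambda>x. indicator (X j) x *\<^sub>R (h x * g i x) + b j i * complex_of_real (indicator (Z j) x *\<^sub>R (cmod (h x))\<^sup>2))"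
        by (simp only: pt)
      also have "\<dots> = IG j i + b j i * complex_of_real (s j)"
      proof -
        have intB: "integrable M (\<lambda>x. b j i * complex_of_real (indicator (Z j) x *\<^sub>R (cmod (h x))\<^sup>2))"
          by (intro integrable_mult_right integrable_of_real intZ[OF j])
        have "integral\<^sup>L M (\<lambda>x. indicator (X j) x *\<^sub>R (h x * g i x) + b j i * complex_of_real (indicator (Z j) x *\<^sub>R (cmod (h x))\<^sup>2))
           = IG j i + integral\<^sup>L M (\<lambda>x. b j i * complex_of_real (indicator (Z j) x *\<^sub>R (cmod (h x))\<^sup>2))"
          unfolding IG_def by (rule Bochner_Integration.integral_add[OF intA intB])
        also have "integral\<^sup>L M (\<lambda>x. b j i * complex_of_real (indicator (Z j) x *\<^sub>R (cmod (h x))\<^sup>2)) = b j i * complex_of_real (s j)"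
          unfolding s_def by (simp only: integral_mult_right_zero integral_complex_of_real)
        finally show ?thesis .
      qed
      also have "\<dots> = D j $ i" unfolding b_def using spos[OF j] by simp
      finally show ?thesis .
    qed
    thus ?thesis unfolding W_op_def \<Phi>_def set_lebesgue_integral_def by (simp add: vec_eq_iff)
  qed
  have ind: "v = 0" if v: "in_Kn K v" and ae: "AE x in M. cinner_vec v (\<chi> i. \<phi> i x) = 0" for v
  proof -
    define c where "c k = cnj (v $ k)" for k
    have cK: "\<forall>k. c k \<in> K" unfolding c_def using v K_cnj[OF K] unfolding in_Kn_def by blast
    have "AE x in M. (\<Sum>k\<in>UNIV. c k * g k x) = 0"
      using ae
    proof eventually_elim
      case (elim x)
      show ?case
      proof (cases "\<exists>j\<in>{1..l}. x \<in> Y j")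
        case True
        then obtain j where "j \<in> {1..l}" "x \<in> Y j" by blast
        hence eq: "\<phi> k x = g k x" for k using \<phi>Y by blast
        have "cnj (cinner_vec v (\<chi> i. \<phi> i x)) = (\<Sum>k\<in>UNIV. c k * g k x)"
          unfolding cinner_vec_def c_def by (simp add: eq)
        thus ?thesis using elim by simp
      next
        case False
        hence "g k x = 0" for k using G3 by blast
        thus ?thesis by simp
      qed
    qed
    hence "\<forall>k. c k = 0" using G4 cK by blast
    thus ?thesis unfolding c_def by (simp add: vec_eq_iff)
  qed
  have F: "cont_frame M K \<Phi>" unfolding \<Phi>_def by (rule frame_from_indep[OF K sq\<phi> \<phi>K ind])
  show "\<exists>\<Phi> :: 'a \<Rightarrow> complex ^ 'n. L2_vec M K \<Phi> \<and> (\<forall>j\<in>{1..l}. W_op M h X \<Phi> j = D j) \<and> cont_frame M K \<Phi>"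
    using L2 W F by blast
qed

end
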